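(* Let $n\ge1$ and $\alpha_n\in\mathbb{C}$, and consider the equation $i\partial_tu=2\alpha_n\,\partial_x\frac{\delta}{\delta\overline{u}}\int_{\mathbb{R}}u\,Y_n\,dx$ with $r=\overline{u}$, with the right-hand side expanded as a polynomial in $u,\overline u$ and their derivatives. For $0\le k\le n$, the coefficient of the cubic term $(\partial_x^{n-k}u)\,\overline{u}\,(\partial_x^ku)$ (i.e. a cubic term with no derivative on the conjugated factor; the terms for $k$ and $n-k$ coincide) on the right-hand side is $$\frac{4(-1)^{n+1}\alpha_n}{(2i)^{n+2}}\Big(\binom{n+2}{k+1}-\delta_{0,k}-\delta_{n,k}\Big),$$ where $\delta_{a,b}$ is the Kronecker delta.
   Context: Define, for functions $q,r$, recursively $Y_0=-\frac{r}{2i}$ and $Y_{n+1}=\frac{1}{2i}\big[\partial_xY_n+q\sum_{k=0}^nY_{n-k}Y_k\big]$, and set $q=u$, $r=\overline u$. The functional derivative is $\frac{\delta}{\delta\phi}\int f(\phi,\partial_x\phi,\dots,\partial_x^N\phi)\,dx=\sum_{k=0}^N(-1)^k\partial_x^k\frac{\partial f}{\partial(\partial_x^k\phi)}$, with $u$ and $\overline u$ treated as independent variables. *)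

theory Defs
  imports Complex_Main "HOL-Library.Poly_Mapping" "HOL-Library.Multiset"
begin

text \<open>Differential polynomials in u and its conjugate (treated as independent):
  the variable U j stands for the j-th x-derivative of u, Ubar j for the j-th
  x-derivative of conj u.\<close>

datatype dvar = U nat | Ubar nat

type_synonym dpoly = "dvar multiset \<Rightarrow>\<^sub>0 complex"

fun dshift :: "dvar \<Rightarrow> dvar" where
  "dshift (U j) = U (Suc j)"
| "dshift (Ubar j) = Ubar (Suc j)"

fun dord :: "dvar \<Rightarrow> nat" where
  "dord (U j) = j"
| "dord (Ubar j) = j"

definition dconst :: "complex \<Rightarrow> dpoly" where
  "dconst c = Poly_Mapping.single {#} c"

definition dv :: "dvar \<Rightarrow> dpoly" where
  "dv v = Poly_Mapping.single {#v#} 1"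

definition Dmon :: "dvar multiset \<Rightarrow> dpoly" where
  "Dmon m = (\<Sum>v\<in>#m. Poly_Mapping.single (m - {#v#} + {#dshift v#}) 1)"

definition Dx :: "dpoly \<Rightarrow> dpoly" where
  "Dx p = (\<Sum>m\<in>Poly_Mapping.keys p. dconst (Poly_Mapping.lookup p m) * Dmon m)"

definition pdiff :: "dvar \<Rightarrow> dpoly \<Rightarrow> dpoly" where
  "pdiff v p = (\<Sum>m\<in>Poly_Mapping.keys p.
      Poly_Mapping.single (m - {#v#}) (Poly_Mapping.lookup p m * of_nat (count m v)))"

definition maxord :: "dpoly \<Rightarrow> nat" where
  "maxord p = Max (insert 0 (dord ` (\<Union>m\<in>Poly_Mapping.keys p. set_mset m)))"

definition varderiv_ubar :: "dpoly \<Rightarrow> dpoly" where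
  "varderiv_ubar f = (\<Sum>k\<le>maxord f. dconst ((-1) ^ k) * (Dx ^^ k) (pdiff (Ubar k) f))"

text \<open>The recursion for Y_n with q = u, r = conj u.\<close>
fun Y :: "nat \<Rightarrow> dpoly" where
  "Y 0 = dconst (- 1 / (2 * \<i>)) * dv (Ubar 0)"
| "Y (Suc n) = dconst (1 / (2 * \<i>)) *
      (Dx (Y n) + dv (U 0) * (\<Sum>k\<le>n. Y (n - k) * Y k))"

definition rhs :: "complex \<Rightarrow> nat \<Rightarrow> dpoly" where
  "rhs \<alpha> n = dconst (2 * \<alpha>) * Dx (varderiv_ubar (dv (U 0) * Y n))"

definition cubic_mon :: "nat \<Rightarrow> nat \<Rightarrow> dvar multiset" where
  "cubic_mon n k = {#U (n - k), Ubar 0, U k#}"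

end

theory Submission
  imports Defs
begin

lemma dconst_mult: "dconst a * dconst b = dconst (a*b)"
  by (simp add: dconst_def mult_single)
lemma dconst_add: "dconst (a+b) = dconst a + dconst b"
  by (simp add: dconst_def single_add)
lemma dconst_0[simp]: "dconst 0 = 0" by (simp add: dconst_def)
lemma dconst_1[simp]: "dconst 1 = 1" by (simp add: dconst_def)

lemma poly_expand: "(p::dpoly) = (\<Sum>m\<in>Poly_Mapping.keys p. Poly_Mapping.single m (Poly_Mapping.lookup p m))"
  by (rule poly_mapping_eqI) (simp add: lookup_sum lookup_single when_def in_keys_iff sum.delta)

lemma lookup_single_mult:
  "Poly_Mapping.lookup (Poly_Mapping.single s c * (p::dpoly)) m = (if s \<subseteq># m then c * Poly_Mapping.lookup p (m - s) else 0)"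
proof -
  have "Poly_Mapping.single s c * p = (\<Sum>x\<in>Poly_Mapping.keys p. Poly_Mapping.single (s + x) (c * Poly_Mapping.lookup p x))"
    by (subst poly_expand[of p]) (simp add: sum_distrib_left mult_single)
  hence "Poly_Mapping.lookup (Poly_Mapping.single s c * p) m = (\<Sum>x\<in>Poly_Mapping.keys p. if s + x = m then c * Poly_Mapping.lookup p x else 0)"
    by (simp add: lookup_sum lookup_single when_def)
  also have "\<dots> = (\<Sum>x\<in>Poly_Mapping.keys p. if x = m - s \<and> s \<subseteq># m then c * Poly_Mapping.lookup p x else 0)"
    by (rule sum.cong) (auto)
  also have "\<dots> = (if s \<subseteq># m then c * Poly_Mapping.lookup p (m - s) else 0)"
    by (cases "s \<subseteq># m") (auto simp: sum.delta in_keys_iff)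
  finally show ?thesis .
qed

definition ext :: "(dvar multiset \<Rightarrow> complex \<Rightarrow> dpoly) \<Rightarrow> dpoly \<Rightarrow> dpoly" where
  "ext F p = (\<Sum>m\<in>Poly_Mapping.keys p. F m (Poly_Mapping.lookup p m))"

definition linF :: "(dvar multiset \<Rightarrow> complex \<Rightarrow> dpoly) \<Rightarrow> bool" where
  "linF F \<longleftrightarrow> (\<forall>m. F m 0 = 0) \<and> (\<forall>m a b. F m (a+b) = F m a + F m b)"

lemma ext_add: "linF F \<Longrightarrow> ext F (p + q) = ext F p + ext F q"
  unfolding ext_def linF_def by (rule setsum_keys_plus_distrib) (auto simp: lookup_add)

lemma ext_zero[simp]: "ext F 0 = 0" by (simp add: ext_def)

lemma ext_single: "linF F \<Longrightarrow> ext F (Poly_Mapping.single m c) = F m c"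
  unfolding ext_def linF_def by (cases "c = 0") auto

lemma ext_sum: "linF F \<Longrightarrow> ext F (\<Sum>i\<in>I. g i) = (\<Sum>i\<in>I. ext F (g i))"
  by (induction I rule: infinite_finite_induct) (simp_all add: ext_add)

lemma ext_deriv:
  assumes L: "linF F"
    and S: "\<And>m1 m2 a b. ext F (Poly_Mapping.single m1 a * Poly_Mapping.single m2 b) =
       ext F (Poly_Mapping.single m1 a) * Poly_Mapping.single m2 b + Poly_Mapping.single m1 a * ext F (Poly_Mapping.single m2 b)"
  shows "ext F (p * q) = ext F p * q + p * ext F q"
proof -
  let ?P = "\<lambda>m. Poly_Mapping.single m (Poly_Mapping.lookup p m)"
  let ?Q = "\<lambda>m. Poly_Mapping.single m (Poly_Mapping.lookup q m)"
  have p: "p = (\<Sum>i\<in>Poly_Mapping.keys p. ?P i)" by (rule poly_expand)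
  have q: "q = (\<Sum>j\<in>Poly_Mapping.keys q. ?Q j)" by (rule poly_expand)
  have "ext F (p * q) = ext F ((\<Sum>i\<in>Poly_Mapping.keys p. ?P i) * (\<Sum>j\<in>Poly_Mapping.keys q. ?Q j))"
    using p q by simp
  also have "\<dots> = (\<Sum>i\<in>Poly_Mapping.keys p. \<Sum>j\<in>Poly_Mapping.keys q. ext F (?P i * ?Q j))"
    by (simp add: sum_product ext_sum[OF L])
  also have "\<dots> = (\<Sum>i\<in>Poly_Mapping.keys p. \<Sum>j\<in>Poly_Mapping.keys q. ext F (?P i) * ?Q j + ?P i * ext F (?Q j))"
    by (simp add: S)
  also have "\<dots> = ext F (\<Sum>i\<in>Poly_Mapping.keys p. ?P i) * (\<Sum>j\<in>Poly_Mapping.keys q. ?Q j) +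
       (\<Sum>i\<in>Poly_Mapping.keys p. ?P i) * ext F (\<Sum>j\<in>Poly_Mapping.keys q. ?Q j)"
    by (simp add: ext_sum[OF L] sum.distrib sum_product)
  finally show ?thesis using p q by simp
qed

lemma Dx_ext: "Dx = ext (\<lambda>m c. dconst c * Dmon m)"
  by (simp add: fun_eq_iff Dx_def ext_def)

lemma linF_Dx: "linF (\<lambda>m c. dconst c * Dmon m)"
  by (simp add: linF_def dconst_add distrib_right)

lemma pdiff_ext: "pdiff v = ext (\<lambda>m c. Poly_Mapping.single (m - {#v#}) (c * of_nat (count m v)))"
  by (simp add: fun_eq_iff pdiff_def ext_def)

lemma linF_pdiff: "linF (\<lambda>m c. Poly_Mapping.single (m - {#v#}) (c * of_nat (count m v)))"
  by (simp add: linF_def single_add distrib_right)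


lemma mdiff1: "v \<in># m1 \<Longrightarrow> m1 + m2 - {#v#} = m1 - {#v#} + m2"
  by (metis add.commute diff_union_single_conv)
lemma mdiff2: "v \<in># m2 \<Longrightarrow> m1 + m2 - {#v#} = m1 + (m2 - {#v#})"
  by (metis diff_union_single_conv)

lemma Dmon_add: "Dmon (m1 + m2) = Dmon m1 * Poly_Mapping.single m2 1 + Poly_Mapping.single m1 1 * Dmon m2"
proof -
  have a: "image_mset (\<lambda>v. Poly_Mapping.single (m1 + m2 - {#v#} + {#dshift v#}) (1::complex)) m1
     = image_mset (\<lambda>v. Poly_Mapping.single (m1 - {#v#} + {#dshift v#}) 1 * Poly_Mapping.single m2 1) m1"
  proof (rule image_mset_cong)
    fix v assume "v \<in># m1"
    then show "Poly_Mapping.single (m1 + m2 - {#v#} + {#dshift v#}) (1::complex) = Poly_Mapping.single (m1 - {#v#} + {#dshift v#}) 1 * Poly_Mapping.single m2 1"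
      by (simp only: mult_single mdiff1) (simp add: ac_simps)
  qed
  have b: "image_mset (\<lambda>v. Poly_Mapping.single (m1 + m2 - {#v#} + {#dshift v#}) (1::complex)) m2
     = image_mset (\<lambda>v. Poly_Mapping.single m1 1 * Poly_Mapping.single (m2 - {#v#} + {#dshift v#}) 1) m2"
  proof (rule image_mset_cong)
    fix v assume "v \<in># m2"
    then show "Poly_Mapping.single (m1 + m2 - {#v#} + {#dshift v#}) (1::complex) = Poly_Mapping.single m1 1 * Poly_Mapping.single (m2 - {#v#} + {#dshift v#}) 1"
      by (simp only: mult_single mdiff2) (simp add: ac_simps)
  qed
  show ?thesis unfolding Dmon_def
    by (simp only: image_mset_union sum_mset.union a b sum_mset_distrib_left sum_mset_distrib_right)
qed

lemma dconst_single: "dconst c * Poly_Mapping.single m d = Poly_Mapping.single m (c*d)"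
  by (simp add: dconst_def mult_single)
lemma single_dconst: "Poly_Mapping.single m c = dconst c * Poly_Mapping.single m 1"
  by (simp add: dconst_single)

lemma Dx_single: "Dx (Poly_Mapping.single m c) = dconst c * Dmon m"
  unfolding Dx_ext by (rule ext_single[OF linF_Dx])

lemma Dx_mult: "Dx (p * q) = Dx p * q + p * Dx q"
  unfolding Dx_ext
proof (rule ext_deriv[OF linF_Dx], unfold Dx_ext[symmetric])
  fix m1 m2 a b
  have "Dx (Poly_Mapping.single m1 a * Poly_Mapping.single m2 b) = dconst (a*b) * Dmon (m1+m2)"
    by (simp only: mult_single Dx_single)
  also have "\<dots> = (dconst a * Dmon m1) * (dconst b * Poly_Mapping.single m2 1) + (dconst a * Poly_Mapping.single m1 1) * (dconst b * Dmon m2)"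
    by (simp only: Dmon_add dconst_mult[symmetric]) (simp add: algebra_simps)
  also have "\<dots> = (dconst a * Dmon m1) * Poly_Mapping.single m2 b + Poly_Mapping.single m1 a * (dconst b * Dmon m2)"
    by (simp add: dconst_single)
  also have "\<dots> = Dx (Poly_Mapping.single m1 a) * Poly_Mapping.single m2 b + Poly_Mapping.single m1 a * Dx (Poly_Mapping.single m2 b)"
    by (simp only: Dx_single)
  finally show "Dx (Poly_Mapping.single m1 a * Poly_Mapping.single m2 b) = Dx (Poly_Mapping.single m1 a) * Poly_Mapping.single m2 b + Poly_Mapping.single m1 a * Dx (Poly_Mapping.single m2 b)" .
qed

lemma pdiff_single: "pdiff v (Poly_Mapping.single m c) = Poly_Mapping.single (m - {#v#}) (c * of_nat (count m v))"
  unfolding pdiff_ext by (rule ext_single[OF linF_pdiff])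

lemma pdiff_mult: "pdiff v (p * q) = pdiff v p * q + p * pdiff v q"
  unfolding pdiff_ext
proof (rule ext_deriv[OF linF_pdiff], unfold pdiff_ext[symmetric])
  fix m1 m2 a b
  show "pdiff v (Poly_Mapping.single m1 a * Poly_Mapping.single m2 b) = pdiff v (Poly_Mapping.single m1 a) * Poly_Mapping.single m2 b + Poly_Mapping.single m1 a * pdiff v (Poly_Mapping.single m2 b)"
  proof (cases "v \<in># m1")
    case True
    show ?thesis
    proof (cases "v \<in># m2")
      case True2: True
      show ?thesis using True True2
        by (simp only: mult_single pdiff_single mdiff1 mdiff2 single_add[symmetric] count_union)
           (simp add: algebra_simps single_add)
    next
      case False
      then have "count m2 v = 0" by (simp add: not_in_iff)
      then show ?thesis using True
        by (simp only: mult_single pdiff_single mdiff1 count_union) (simp add: algebra_simps)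
    qed
  next
    case False
    then have c: "count m1 v = 0" by (simp add: not_in_iff)
    show ?thesis
    proof (cases "v \<in># m2")
      case True2: True
      show ?thesis using c True2
        by (simp only: mult_single pdiff_single mdiff2 count_union) (simp add: algebra_simps)
    next
      case False2: False
      then have "count m2 v = 0" by (simp add: not_in_iff)
      then show ?thesis using c
        by (simp only: mult_single pdiff_single count_union) simp
    qed
  qed
qed

lemma Dx_add: "Dx (p + q) = Dx p + Dx q"
  unfolding Dx_ext by (rule ext_add[OF linF_Dx])
lemma Dx_zero[simp]: "Dx 0 = 0" unfolding Dx_ext by simp
lemma Dx_sum: "Dx (\<Sum>i\<in>I. g i) = (\<Sum>i\<in>I. Dx (g i))"
  unfolding Dx_ext by (rule ext_sum[OF linF_Dx])
lemma Dmon_empty[simp]: "Dmon {#} = 0" by (simp add: Dmon_def)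
lemma Dx_dconst[simp]: "Dx (dconst c) = 0"
  unfolding dconst_def Dx_single by simp
lemma Dx_dconst_mult: "Dx (dconst c * p) = dconst c * Dx p"
  by (simp add: Dx_mult)
lemma Dx_dv: "Dx (dv v) = dv (dshift v)"
  unfolding dv_def Dx_single by (simp add: Dmon_def dv_def dconst_single)

lemma Dxn_add: "(Dx^^k) (p + q) = (Dx^^k) p + (Dx^^k) q"
  by (induction k) (simp_all add: Dx_add)
lemma Dxn_zero[simp]: "(Dx^^k) 0 = 0"
  by (induction k) simp_all
lemma Dxn_sum: "(Dx^^k) (\<Sum>i\<in>I. g i) = (\<Sum>i\<in>I. (Dx^^k) (g i))"
  by (induction I rule: infinite_finite_induct) (simp_all add: Dxn_add)
lemma Dxn_dconst_mult: "(Dx^^k) (dconst c * p) = dconst c * (Dx^^k) p"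
  by (induction k) (simp_all add: Dx_dconst_mult)

fun dshiftn :: "nat \<Rightarrow> dvar \<Rightarrow> dvar" where
  "dshiftn k (U j) = U (j + k)" | "dshiftn k (Ubar j) = Ubar (j + k)"

lemma Dxn_dv_U: "(Dx^^k) (dv (U j)) = dv (U (j + k))"
  by (induction k) (simp_all add: Dx_dv)
lemma Dxn_dv_Ubar: "(Dx^^k) (dv (Ubar j)) = dv (Ubar (j + k))"
  by (induction k) (simp_all add: Dx_dv)

lemma leibniz: "(Dx^^r) (p * q) = (\<Sum>i\<le>r. dconst (of_nat (r choose i)) * ((Dx^^i) p * (Dx^^(r-i)) q))"
proof (induction r)
  case 0 then show ?case by simp
next
  case (Suc r)
  define f where "f i = (Dx^^i) p * (Dx^^(Suc r - i)) q" for i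
  have "(Dx^^Suc r) (p * q) = (\<Sum>i\<le>r. dconst (of_nat (r choose i)) * ((Dx^^Suc i) p * (Dx^^(r-i)) q + (Dx^^i) p * (Dx^^Suc (r-i)) q))"
    by (simp add: Suc Dx_sum Dx_dconst_mult Dx_mult)
  also have "\<dots> = (\<Sum>i\<le>r. dconst (of_nat (r choose i)) * f (Suc i)) + (\<Sum>i\<le>r. dconst (of_nat (r choose i)) * f i)"
    by (simp add: f_def sum.distrib distrib_left Suc_diff_le)
  also have "(\<Sum>i\<le>r. dconst (of_nat (r choose i)) * f i) = (\<Sum>i\<le>Suc r. dconst (of_nat (r choose i)) * f i)"
    by (simp add: binomial_eq_0)
  also have "(\<Sum>i\<le>r. dconst (of_nat (r choose i)) * f (Suc i)) = (\<Sum>i\<le>Suc r. (if i = 0 then 0 else dconst (of_nat (r choose (i - 1))) * f i))"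
    by (simp add: sum.atMost_Suc_shift del: sum.atMost_Suc)
  also have "\<dots> + (\<Sum>i\<le>Suc r. dconst (of_nat (r choose i)) * f i) = (\<Sum>i\<le>Suc r. dconst (of_nat (Suc r choose i)) * f i)"
    unfolding sum.distrib[symmetric]
  proof (rule sum.cong[OF refl])
    fix i show "(if i = 0 then 0 else dconst (of_nat (r choose (i - 1))) * f i) + dconst (of_nat (r choose i)) * f i =
         dconst (of_nat (Suc r choose i)) * f i"
      by (cases i) (simp_all add: dconst_add[symmetric] distrib_right[symmetric] add.commute)
  qed
  finally show ?case by (simp add: f_def)
qed

lemma pdiff_add: "pdiff v (p + q) = pdiff v p + pdiff v q"
  unfolding pdiff_ext by (rule ext_add[OF linF_pdiff])
lemma pdiff_zero[simp]: "pdiff v 0 = 0" unfolding pdiff_ext by simp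
lemma pdiff_sum: "pdiff v (\<Sum>i\<in>I. g i) = (\<Sum>i\<in>I. pdiff v (g i))"
  unfolding pdiff_ext by (rule ext_sum[OF linF_pdiff])
lemma pdiff_dconst[simp]: "pdiff v (dconst c) = 0"
  unfolding dconst_def pdiff_single by simp
lemma pdiff_dconst_mult: "pdiff v (dconst c * p) = dconst c * pdiff v p"
  by (simp add: pdiff_mult)
lemma pdiff_dv: "pdiff v (dv w) = (if v = w then 1 else 0)"
  unfolding dv_def pdiff_single by auto

definition szge :: "nat \<Rightarrow> dpoly \<Rightarrow> bool" where
  "szge s p \<longleftrightarrow> (\<forall>m\<in>Poly_Mapping.keys p. s \<le> size m)"

lemma szge_zero[simp]: "szge s 0" by (simp add: szge_def)
lemma szge_0[simp]: "szge 0 p" by (simp add: szge_def)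
lemma szge_add: "szge s p \<Longrightarrow> szge s q \<Longrightarrow> szge s (p + q)"
  using keys_add[of p q] by (auto simp: szge_def)
lemma szge_sum: "(\<And>i. i \<in> I \<Longrightarrow> szge s (g i)) \<Longrightarrow> szge s (\<Sum>i\<in>I. g i)"
  by (induction I rule: infinite_finite_induct) (auto intro: szge_add)
lemma szge_mult: "szge s p \<Longrightarrow> szge t q \<Longrightarrow> szge (s + t) (p * q)"
  unfolding szge_def
proof
  fix x assume sp: "\<forall>m\<in>Poly_Mapping.keys p. s \<le> size m" and tq: "\<forall>m\<in>Poly_Mapping.keys q. t \<le> size m"
    and x: "x \<in> Poly_Mapping.keys (p * q)"
  then obtain a b where "x = a + b" "a \<in> Poly_Mapping.keys p" "b \<in> Poly_Mapping.keys q"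
    using keys_mult[of p q] by blast
  then show "s + t \<le> size x" using sp tq by (simp add: add_mono)
qed
lemma szge_mono: "s' \<le> s \<Longrightarrow> szge s p \<Longrightarrow> szge s' p"
  by (auto simp: szge_def)
lemma szge_single: "s \<le> size m \<Longrightarrow> szge s (Poly_Mapping.single m c)"
  by (simp add: szge_def)
lemma szge_dv: "szge 1 (dv v)"
  by (simp add: dv_def szge_single)
lemma szge_dconst_mult: "szge s p \<Longrightarrow> szge s (dconst c * p)"
  using szge_mult[of 0 "dconst c" s p] by simp
lemma szge_sum_mset: "(\<And>v. v \<in># M \<Longrightarrow> szge s (f v)) \<Longrightarrow> szge s (\<Sum>v\<in>#M. f v)"
  by (induction M) (auto intro: szge_add)
lemma szge_Dmon: "szge (size m) (Dmon m)"
  unfolding Dmon_def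
proof (rule szge_sum_mset)
  fix v assume "v \<in># m"
  then have "size (m - {#v#} + {#dshift v#}) = size m"
  proof -
    have "size (m - {#v#}) < size m" using \<open>v \<in># m\<close> by (rule size_Diff1_less)
    then show ?thesis using \<open>v \<in># m\<close> by (simp add: size_Diff_singleton)
  qed
  then show "szge (size m) (Poly_Mapping.single (m - {#v#} + {#dshift v#}) 1)"
    by (simp add: szge_single)
qed
lemma szge_Dx: "szge s p \<Longrightarrow> szge s (Dx p)"
  unfolding Dx_def
proof (rule szge_sum)
  fix m assume "szge s p" "m \<in> Poly_Mapping.keys p"
  then have "s \<le> size m" by (simp add: szge_def)
  then show "szge s (dconst (Poly_Mapping.lookup p m) * Dmon m)"
    by (intro szge_dconst_mult szge_mono[OF _ szge_Dmon])
qed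
lemma szge_Dxn: "szge s p \<Longrightarrow> szge s ((Dx^^k) p)"
  by (induction k) (auto intro: szge_Dx)
lemma szge_pdiff: "szge (Suc s) p \<Longrightarrow> szge s (pdiff v p)"
  unfolding pdiff_def
  by (rule szge_sum) (auto simp: szge_def size_Diff_singleton_if)
lemma lookup_szge: "szge s p \<Longrightarrow> size m < s \<Longrightarrow> Poly_Mapping.lookup p m = 0"
  unfolding szge_def by (metis in_keys_iff not_less)

lemma sum_shrink: fixes N M :: nat assumes "N \<le> M" "\<And>i. N < i \<Longrightarrow> f i = 0" shows "(\<Sum>i\<le>M. f i) = (\<Sum>i\<le>N. f i)"
  using assms by (intro sum.mono_neutral_right) (auto simp: not_le[symmetric])

lemma sum_shift1: "(\<Sum>i\<le>Suc N. (if 0 < i then g i else 0)) = (\<Sum>i\<le>N. g (Suc i))"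
  by (simp add: sum.atMost_Suc_shift del: sum.atMost_Suc)

lemma sum_shrink2: fixes h :: "nat \<Rightarrow> nat \<Rightarrow> 'a::comm_monoid_add"
  assumes "\<And>b e. N < b \<or> N < e \<Longrightarrow> h b e = 0"
  shows "(\<Sum>b\<le>Suc N. \<Sum>e\<le>Suc N. h b e) = (\<Sum>b\<le>N. \<Sum>e\<le>N. h b e)"
proof -
  have "(\<Sum>b\<le>Suc N. \<Sum>e\<le>Suc N. h b e) = (\<Sum>b\<le>N. \<Sum>e\<le>Suc N. h b e)"
    by (rule sum_shrink) (auto simp: assms)
  also have "\<dots> = (\<Sum>b\<le>N. \<Sum>e\<le>N. h b e)"
    by (rule sum.cong[OF refl], rule sum_shrink) (auto simp: assms)
  finally show ?thesis .
qed

definition M3 :: "nat \<Rightarrow> nat \<Rightarrow> nat \<Rightarrow> dpoly" where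
  "M3 a b e = dv (U a) * dv (Ubar b) * dv (Ubar e)"

definition T :: "nat \<Rightarrow> (nat \<Rightarrow> nat \<Rightarrow> nat \<Rightarrow> complex) \<Rightarrow> dpoly" where
  "T N c = (\<Sum>a\<le>N. \<Sum>b\<le>N. \<Sum>e\<le>N. dconst (c a b e) * M3 a b e)"

definition supp :: "nat \<Rightarrow> (nat \<Rightarrow> nat \<Rightarrow> nat \<Rightarrow> complex) \<Rightarrow> bool" where
  "supp N c \<longleftrightarrow> (\<forall>a b e. c a b e \<noteq> 0 \<longrightarrow> a \<le> N \<and> b \<le> N \<and> e \<le> N)"

lemma T_add: "T N (\<lambda>a b e. c1 a b e + c2 a b e) = T N c1 + T N c2"
  by (simp add: T_def dconst_add distrib_right sum.distrib)

lemma T_scale: "T N (\<lambda>a b e. k * c a b e) = dconst k * T N c"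
  by (simp add: T_def dconst_mult[symmetric] sum_distrib_left mult.assoc)

lemma Dx_M3: "Dx (M3 a b e) = M3 (Suc a) b e + M3 a (Suc b) e + M3 a b (Suc e)"
  by (simp add: M3_def Dx_mult Dx_dv algebra_simps)

lemma Dx_T:
  assumes "supp N c"
  shows "Dx (T N c) = T (Suc N) (\<lambda>a b e. (if 0 < a then c (a-1) b e else 0) + (if 0 < b then c a (b-1) e else 0) + (if 0 < e then c a b (e-1) else 0))"
proof -
  have z: "c a b e = 0" if "\<not> (a \<le> N \<and> b \<le> N \<and> e \<le> N)" for a b e
    using assms that unfolding supp_def by blast
  have "Dx (T N c) = (\<Sum>a\<le>N. \<Sum>b\<le>N. \<Sum>e\<le>N. dconst (c a b e) * M3 (Suc a) b e) +
       (\<Sum>a\<le>N. \<Sum>b\<le>N. \<Sum>e\<le>N. dconst (c a b e) * M3 a (Suc b) e) +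
       (\<Sum>a\<le>N. \<Sum>b\<le>N. \<Sum>e\<le>N. dconst (c a b e) * M3 a b (Suc e))"
    by (simp add: T_def Dx_sum Dx_dconst_mult Dx_M3 distrib_left sum.distrib)
  also have "(\<Sum>a\<le>N. \<Sum>b\<le>N. \<Sum>e\<le>N. dconst (c a b e) * M3 (Suc a) b e) = T (Suc N) (\<lambda>a b e. if 0 < a then c (a-1) b e else 0)"
  proof -
    have "T (Suc N) (\<lambda>a b e. if 0 < a then c (a-1) b e else 0) =
      (\<Sum>a\<le>Suc N. if 0 < a then (\<Sum>b\<le>Suc N. \<Sum>e\<le>Suc N. dconst (c (a-1) b e) * M3 a b e) else 0)"
      unfolding T_def by (rule sum.cong) auto
    also have "\<dots> = (\<Sum>a\<le>N. \<Sum>b\<le>Suc N. \<Sum>e\<le>Suc N. dconst (c a b e) * M3 (Suc a) b e)"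
      by (subst sum_shift1) simp
    also have "\<dots> = (\<Sum>a\<le>N. \<Sum>b\<le>N. \<Sum>e\<le>N. dconst (c a b e) * M3 (Suc a) b e)"
      by (rule sum.cong[OF refl], rule sum_shrink2) (auto simp: z)
    finally show ?thesis by simp
  qed
  also have "(\<Sum>a\<le>N. \<Sum>b\<le>N. \<Sum>e\<le>N. dconst (c a b e) * M3 a (Suc b) e) = T (Suc N) (\<lambda>a b e. if 0 < b then c a (b-1) e else 0)"
  proof -
    have "T (Suc N) (\<lambda>a b e. if 0 < b then c a (b-1) e else 0) =
      (\<Sum>a\<le>Suc N. \<Sum>b\<le>Suc N. if 0 < b then (\<Sum>e\<le>Suc N. dconst (c a (b-1) e) * M3 a b e) else 0)"
      unfolding T_def by (intro sum.cong) auto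
    also have "\<dots> = (\<Sum>a\<le>Suc N. \<Sum>b\<le>N. \<Sum>e\<le>Suc N. dconst (c a b e) * M3 a (Suc b) e)"
      by (subst sum_shift1) simp
    also have "\<dots> = (\<Sum>a\<le>N. \<Sum>b\<le>N. \<Sum>e\<le>N. dconst (c a b e) * M3 a (Suc b) e)"
      by (subst sum_shrink[of N]) (auto simp: z intro!: sum.cong sum_shrink)
    finally show ?thesis by simp
  qed
  also have "(\<Sum>a\<le>N. \<Sum>b\<le>N. \<Sum>e\<le>N. dconst (c a b e) * M3 a b (Suc e)) = T (Suc N) (\<lambda>a b e. if 0 < e then c a b (e-1) else 0)"
  proof -
    have "T (Suc N) (\<lambda>a b e. if 0 < e then c a b (e-1) else 0) =
      (\<Sum>a\<le>Suc N. \<Sum>b\<le>Suc N. \<Sum>e\<le>Suc N. if 0 < e then dconst (c a b (e-1)) * M3 a b e else 0)"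
      unfolding T_def by (intro sum.cong) auto
    also have "\<dots> = (\<Sum>a\<le>Suc N. \<Sum>b\<le>Suc N. \<Sum>e\<le>N. dconst (c a b e) * M3 a b (Suc e))"
      by (subst sum_shift1) simp
    also have "\<dots> = (\<Sum>a\<le>N. \<Sum>b\<le>N. \<Sum>e\<le>N. dconst (c a b e) * M3 a b (Suc e))"
      by (subst sum_shrink[of N]) (auto simp: z intro!: sum.cong sum_shrink)
    finally show ?thesis by simp
  qed
  finally show ?thesis by (simp add: T_add)
qed

fun cc :: "nat \<Rightarrow> nat \<Rightarrow> nat \<Rightarrow> nat \<Rightarrow> complex" where
  "cc 0 a b e = 0"
| "cc (Suc n) a b e = (1/(2*\<i>)) * ((if 0 < a then cc n (a-1) b e else 0) + (if 0 < b then cc n a (b-1) e else 0)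
      + (if 0 < e then cc n a b (e-1) else 0)) + (if a = 0 \<and> b + e = n then (1/(2*\<i>))^(n+3) else 0)"

lemma cc_supp: "cc n a b e \<noteq> 0 \<Longrightarrow> a + b + e + 1 = n"
proof (induction n arbitrary: a b e)
  case 0 then show ?case by simp
next
  case (Suc n)
  show ?case
  proof (rule ccontr)
    assume ne: "a + b + e + 1 \<noteq> Suc n"
    have "(if 0 < a then cc n (a-1) b e else 0) = 0" using Suc.IH[of "a-1" b e] ne by (cases a) auto
    moreover have "(if 0 < b then cc n a (b-1) e else 0) = 0" using Suc.IH[of a "b-1" e] ne by (cases b) auto
    moreover have "(if 0 < e then cc n a b (e-1) else 0) = 0" using Suc.IH[of a b "e-1"] ne by (cases e) auto
    ultimately show False using Suc.prems ne by (simp split: if_split_asm)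
  qed
qed

lemma supp_cc: "supp n (cc n)"
  unfolding supp_def using cc_supp by fastforce

definition Lp :: "nat \<Rightarrow> dpoly" where
  "Lp n = dconst (- ((1/(2*\<i>))^(Suc n))) * dv (Ubar n)"

definition Q :: "nat \<Rightarrow> dpoly" where
  "Q n = T n (cc n)"

lemma sum_rev2: "(\<Sum>k\<le>n. f (n - k) k) = (\<Sum>b\<le>(n::nat). f b (n - b))"
  by (rule sum.reindex_bij_witness[where i="\<lambda>k. n - k" and j="\<lambda>k. n - k"]) auto

lemma dconst_if[simp]: "dconst (if P then x else 0) * y = (if P then dconst x * y else 0)"
  by simp

lemma T_ind: "T (Suc n) (\<lambda>a b e. if a = 0 \<and> b + e = n then x else 0) = (\<Sum>b\<le>n. dconst x * M3 0 b (n - b))"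
proof -
  have "T (Suc n) (\<lambda>a b e. if a = 0 \<and> b + e = n then x else 0) =
     (\<Sum>a\<le>Suc n. if a = 0 then (\<Sum>b\<le>Suc n. \<Sum>e\<le>Suc n. if b + e = n then dconst x * M3 a b e else 0) else 0)"
    unfolding T_def by (intro sum.cong) auto
  also have "\<dots> = (\<Sum>b\<le>Suc n. \<Sum>e\<le>Suc n. if b + e = n then dconst x * M3 0 b e else 0)"
    by (simp add: sum.delta)
  also have "\<dots> = (\<Sum>b\<le>Suc n. if b \<le> n then dconst x * M3 0 b (n - b) else 0)"
  proof (rule sum.cong[OF refl])
    fix b assume "b \<in> {..Suc n}"
    have "(\<Sum>e\<le>Suc n. if b + e = n then dconst x * M3 0 b e else 0) = (\<Sum>e\<le>Suc n. if e = n - b \<and> b \<le> n then dconst x * M3 0 b e else 0)"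
      by (intro sum.cong) auto
    also have "\<dots> = (if b \<le> n then dconst x * M3 0 b (n - b) else 0)"
      by (cases "b \<le> n") (auto simp add: sum.delta del: sum.atMost_Suc)
    finally show "(\<Sum>e\<le>Suc n. if b + e = n then dconst x * M3 0 b e else 0) = (if b \<le> n then dconst x * M3 0 b (n - b) else 0)" .
  qed
  also have "\<dots> = (\<Sum>b\<le>n. dconst x * M3 0 b (n - b))"
    by (simp add: sum.atMost_Suc)
  finally show ?thesis .
qed

lemma Q_Suc: "Q (Suc n) = dconst (1/(2*\<i>)) * (Dx (Q n) + dv (U 0) * (\<Sum>k\<le>n. Lp (n - k) * Lp k))"
proof -
  have cc: "cc (Suc n) = (\<lambda>a b e. (1/(2*\<i>)) * ((if 0 < a then cc n (a-1) b e else 0) + (if 0 < b then cc n a (b-1) e else 0)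
      + (if 0 < e then cc n a b (e-1) else 0)) + (if a = 0 \<and> b + e = n then (1/(2*\<i>))^(n+3) else 0))"
    by (simp add: fun_eq_iff)
  have "Q (Suc n) = dconst (1/(2*\<i>)) * Dx (Q n) + (\<Sum>b\<le>n. dconst ((1/(2*\<i>))^(n+3)) * M3 0 b (n - b))"
    unfolding Q_def cc T_add T_scale T_ind Dx_T[OF supp_cc] ..
  also have "(\<Sum>b\<le>n. dconst ((1/(2*\<i>))^(n+3)) * M3 0 b (n - b)) = (\<Sum>k\<le>n. dconst ((1/(2*\<i>))^(n+3)) * M3 0 (n - k) k)"
    by (rule sum_rev2[symmetric, where f = "\<lambda>b k. dconst ((1/(2*\<i>))^(n+3)) * M3 0 b k"])
  also have "\<dots> = dconst (1/(2*\<i>)) * (dv (U 0) * (\<Sum>k\<le>n. Lp (n - k) * Lp k))"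
    unfolding sum_distrib_left
  proof (rule sum.cong[OF refl])
    fix k assume "k \<in> {..n}"
    then have e: "n + 3 = Suc (n-k) + Suc k + 1" by simp
    have "(1/(2*\<i>)) * ((- ((1/(2*\<i>))^(Suc (n-k)))) * (- ((1/(2*\<i>))^(Suc k)))) = (1/(2*\<i>))^(n+3)"
      by (simp only: e power_add power_one_right mult_minus_left mult_minus_right minus_minus mult_ac)
    then show "dconst ((1/(2*\<i>))^(n+3)) * M3 0 (n - k) k = dconst (1/(2*\<i>)) * (dv (U 0) * (Lp (n - k) * Lp k))"
    proof -
      have "dconst (1/(2*\<i>)) * (dv (U 0) * (Lp (n - k) * Lp k)) = dconst ((1/(2*\<i>)) * ((- ((1/(2*\<i>))^(Suc (n-k)))) * (- ((1/(2*\<i>))^(Suc k))))) * M3 0 (n - k) k"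
        unfolding Lp_def M3_def by (simp only: dconst_mult[symmetric] mult_ac)
      then show ?thesis using \<open>_ = (1/(2*\<i>))^(n+3)\<close> by simp
    qed
  qed
  finally show ?thesis by (simp add: distrib_left)
qed

lemma szge_M3: "szge 3 (M3 a b e)"
proof -
  have "szge (1+1+1) (M3 a b e)" unfolding M3_def by (rule szge_mult[OF szge_mult[OF szge_dv szge_dv] szge_dv])
  then show ?thesis by (simp add: numeral_3_eq_3)
qed
lemma szge_T: "szge 3 (T N c)"
  unfolding T_def by (intro szge_sum szge_dconst_mult szge_M3)
lemma szge_Q: "szge 3 (Q n)"
  unfolding Q_def by (rule szge_T)
lemma szge_Lp: "szge 1 (Lp n)"
  unfolding Lp_def by (intro szge_dconst_mult szge_dv)

lemma Lp_Suc: "Lp (Suc n) = dconst (1/(2*\<i>)) * Dx (Lp n)"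
  unfolding Lp_def by (simp add: Dx_dconst_mult Dx_dv dconst_mult mult.assoc[symmetric])

definition R :: "nat \<Rightarrow> dpoly" where "R n = Y n - Lp n - Q n"

lemma Y_decomp: "Y n = Lp n + Q n + R n"
  by (simp add: R_def)

lemma Q_0: "Q 0 = 0"
  by (simp add: Q_def T_def)

lemma R_0: "R 0 = 0"
  by (simp add: R_def Q_0 Lp_def)

lemma szge_R: "szge 5 (R n)"
proof (induction n rule: less_induct)
  case (less n)
  show ?case
  proof (cases n)
    case 0 then show ?thesis by (simp add: R_0)
  next
    case (Suc n')
    have IH: "\<And>j. j \<le> n' \<Longrightarrow> szge 5 (R j)" using less Suc by simp
    have "R (Suc n') = dconst (1/(2*\<i>)) * (Dx (R n') + dv (U 0) * (\<Sum>k\<le>n'. Y (n' - k) * Y k - Lp (n' - k) * Lp k))"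
    proof -
      have "R (Suc n') = dconst (1/(2*\<i>)) * (Dx (Lp n' + Q n' + R n') + dv (U 0) * (\<Sum>k\<le>n'. Y (n' - k) * Y k))
          - dconst (1/(2*\<i>)) * Dx (Lp n') - dconst (1/(2*\<i>)) * (Dx (Q n') + dv (U 0) * (\<Sum>k\<le>n'. Lp (n' - k) * Lp k))"
        by (simp only: R_def[of "Suc n'"] Y.simps Lp_Suc Q_Suc) (simp add: R_def)
      also have "\<dots> = dconst (1/(2*\<i>)) * (Dx (R n') + dv (U 0) * ((\<Sum>k\<le>n'. Y (n' - k) * Y k) - (\<Sum>k\<le>n'. Lp (n' - k) * Lp k)))"
        by (simp add: Dx_add algebra_simps)
      finally show ?thesis by (simp add: sum_subtractf)
    qed
    also have "szge 5 \<dots>"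
    proof (intro szge_dconst_mult szge_add szge_Dx IH order_refl)
      have "szge 4 (\<Sum>k\<le>n'. Y (n' - k) * Y k - Lp (n' - k) * Lp k)"
      proof (rule szge_sum)
        fix k assume "k \<in> {..n'}"
        let ?a = "n' - k"
        have e: "Y ?a * Y k - Lp ?a * Lp k = Lp ?a * (Q k + R k) + (Q ?a + R ?a) * Lp k + (Q ?a + R ?a) * (Q k + R k)"
          by (simp only: Y_decomp) (simp add: algebra_simps)
        have r1: "szge 5 (R ?a)" "szge 5 (R k)" using IH \<open>k \<in> {..n'}\<close> by auto
        have qa: "szge 3 (Q ?a + R ?a)" by (intro szge_add szge_Q szge_mono[OF _ r1(1)]) simp
        have qk: "szge 3 (Q k + R k)" by (intro szge_add szge_Q szge_mono[OF _ r1(2)]) simp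
        show "szge 4 (Y ?a * Y k - Lp ?a * Lp k)"
        proof -
          have t1: "szge 4 (Lp ?a * (Q k + R k))" using szge_mult[OF szge_Lp qk] by simp
          have t2: "szge 4 ((Q ?a + R ?a) * Lp k)" using szge_mult[OF qa szge_Lp] by simp
          have t3: "szge 4 ((Q ?a + R ?a) * (Q k + R k))" using szge_mono[OF _ szge_mult[OF qa qk]] by simp
          show ?thesis unfolding e by (intro szge_add t1 t2 t3)
        qed
      qed
      then show "szge 5 (dv (U 0) * (\<Sum>k\<le>n'. Y (n' - k) * Y k - Lp (n' - k) * Lp k))"
        using szge_mult[OF szge_dv] by fastforce
    qed
    finally show ?thesis using Suc by simp
  qed
qed

definition V :: "nat \<Rightarrow> dpoly \<Rightarrow> dpoly" where
  "V N g = (\<Sum>k\<le>N. dconst ((-1) ^ k) * (Dx ^^ k) (pdiff (Ubar k) g))"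

lemma varderiv_V: "varderiv_ubar f = V (maxord f) f"
  by (simp add: varderiv_ubar_def V_def)

lemma V_add: "V N (p + q) = V N p + V N q"
  by (simp add: V_def pdiff_add Dxn_add distrib_left sum.distrib)

lemma V_dconst_mult: "V N (dconst c * p) = dconst c * V N p"
  by (simp add: V_def pdiff_dconst_mult Dxn_dconst_mult sum_distrib_left mult.left_commute)

lemma V_zero[simp]: "V N 0 = 0" by (simp add: V_def)
lemma V_sum: "V N (\<Sum>i\<in>I. g i) = (\<Sum>i\<in>I. V N (g i))"
  by (induction I rule: infinite_finite_induct) (simp_all add: V_add)

lemma szge_V: "szge (Suc s) p \<Longrightarrow> szge s (V N p)"
  unfolding V_def by (intro szge_sum szge_dconst_mult szge_Dxn szge_pdiff)

lemma maxord_ge: "m \<in> Poly_Mapping.keys f \<Longrightarrow> v \<in># m \<Longrightarrow> dord v \<le> maxord f"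
  unfolding maxord_def by (rule Max_ge) auto

lemma lookup_dconst_mult: "Poly_Mapping.lookup (dconst c * p) m = c * Poly_Mapping.lookup p m"
  unfolding dconst_def lookup_single_mult by simp

lemma lookup_dv: "Poly_Mapping.lookup (dv v) m = (if m = {#v#} then 1 else 0)"
  by (simp add: dv_def lookup_single when_def)

lemma lookup_mult_dv: "Poly_Mapping.lookup (p * dv v) m = (if v \<in># m then Poly_Mapping.lookup p (m - {#v#}) else 0)"
  by (simp add: dv_def mult.commute[of p] lookup_single_mult)

lemma dv_mult_dv: "dv a * dv b = Poly_Mapping.single {#a, b#} 1"
  by (simp add: dv_def mult_single add_mset_commute)

lemma mset2_eq: "({#a, b#} = {#c, d#}) \<longleftrightarrow> (a = c \<and> b = d) \<or> (a = d \<and> b = c)"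
  by (auto simp: add_eq_conv_diff)

lemma sum_two_delta: "(\<Sum>j\<le>r. of_nat (r choose j) * (if j = x \<or> j = y then 1 else 0)) =
    (if x = y then of_nat (r choose x) else of_nat (r choose x) + (of_nat (r choose y) :: complex))"
proof (cases "x = y")
  case True
  then show ?thesis by (simp add: sum.delta' binomial_eq_0 if_distrib cong: if_cong)
next
  case False
  have "(\<Sum>j\<le>r. of_nat (r choose j) * (if j = x \<or> j = y then 1 else 0)) =
     (\<Sum>j\<le>r. (if j = x then of_nat (r choose j) else 0) + (if j = y then of_nat (r choose j) else (0::complex)))"
    using False by (intro sum.cong) auto
  also have "\<dots> = of_nat (r choose x) + of_nat (r choose y)"
    by (simp add: sum.distrib sum.delta binomial_eq_0)
  finally show ?thesis using False by simp
qed

lemma G2: "Poly_Mapping.lookup ((Dx^^r) (dv (U 0) * dv (U q))) {#U x, U y#} =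
  (if q + r = x + y then (if x = y then of_nat (r choose x) else of_nat (r choose x) + of_nat (r choose y)) else 0)"
proof -
  have "Poly_Mapping.lookup ((Dx^^r) (dv (U 0) * dv (U q))) {#U x, U y#} =
      (\<Sum>j\<le>r. of_nat (r choose j) * (if {#U j, U (q + (r - j))#} = {#U x, U y#} then 1 else 0))"
    by (simp only: leibniz Dxn_dv_U) (simp add: lookup_sum lookup_dconst_mult dv_mult_dv lookup_single when_def)
  also have "\<dots> = (\<Sum>j\<le>r. of_nat (r choose j) * (if q + r = x + y \<and> (j = x \<or> j = y) then 1 else 0))"
    by (intro sum.cong refl) (auto simp: mset2_eq)
  also have "\<dots> = (if q + r = x + y then (if x = y then of_nat (r choose x) else of_nat (r choose x) + of_nat (r choose y)) else 0)"
    by (cases "q + r = x + y") (simp_all add: sum_two_delta)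
  finally show ?thesis .
qed

lemma G3: "Poly_Mapping.lookup ((Dx^^r) (dv (U 0) * dv (U q) * dv (Ubar e))) {#U x, Ubar 0, U y#} =
   (if e = 0 then Poly_Mapping.lookup ((Dx^^r) (dv (U 0) * dv (U q))) {#U x, U y#} else 0)"
proof -
  have "Poly_Mapping.lookup ((Dx^^r) (dv (U 0) * dv (U q) * dv (Ubar e))) {#U x, Ubar 0, U y#} =
     (\<Sum>i\<le>r. of_nat (r choose i) * (if e + r \<le> i then Poly_Mapping.lookup ((Dx^^i) (dv (U 0) * dv (U q))) ({#U x, U y, Ubar 0#} - {#Ubar (e + r - i)#}) else 0))"
    by (simp add: leibniz[of r "dv (U 0) * dv (U q)"] Dxn_dv_Ubar lookup_sum lookup_dconst_mult lookup_mult_dv add_mset_commute)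
  also have "\<dots> = (\<Sum>i\<le>r. if i = r \<and> e = 0 then of_nat (r choose i) * Poly_Mapping.lookup ((Dx^^i) (dv (U 0) * dv (U q))) {#U x, U y#} else 0)"
    by (intro sum.cong refl) auto
  also have "\<dots> = (if e = 0 then Poly_Mapping.lookup ((Dx^^r) (dv (U 0) * dv (U q))) {#U x, U y#} else 0)" by (cases "e = 0") (simp_all add: sum.delta)
  finally show ?thesis .
qed

lemma cc_sym: "cc n a b e = cc n a e b"
proof (induction n arbitrary: a b e)
  case 0 then show ?case by simp
next
  case (Suc n)
  show ?case by (simp add: Suc.IH[of _ b] add.commute) (simp add: Suc.IH)
qed

lemma cc_b0: "cc n a b 0 = (if a + b + 1 = n then (1/(2*\<i>))^(n+2) * of_nat (n choose b) else 0)"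
proof (induction n arbitrary: a b)
  case 0 then show ?case by simp
next
  case (Suc n)
  define z where "z = 1/(2*\<i>)"
  have e: "cc (Suc n) a b 0 = z * ((if 0 < a then cc n (a-1) b 0 else 0) + (if 0 < b then cc n a (b-1) 0 else 0))
     + (if a = 0 \<and> b = n then z^(n+3) else 0)"
    by (simp add: z_def)
  show ?case
  proof (cases "a + b = n")
    case False
    then show ?thesis unfolding e Suc.IH z_def[symmetric] by (auto simp: z_def[symmetric])
  next
    case True
    show ?thesis
    proof (cases a)
      case 0
      with True have b: "b = n" by simp
      show ?thesis
      proof (cases n)
        case 0 then show ?thesis unfolding e Suc.IH z_def[symmetric] using b \<open>a = 0\<close> by (simp add: z_def eval_nat_numeral)
      next
        case (Suc n')
        then show ?thesis unfolding e Suc.IH z_def[symmetric] using b \<open>a = 0\<close>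
          by (simp add: algebra_simps eval_nat_numeral)
      qed
    next
      case (Suc a')
      show ?thesis
      proof (cases b)
        case 0 then show ?thesis unfolding e Suc.IH z_def[symmetric] using True \<open>a = Suc a'\<close> by (simp add: algebra_simps eval_nat_numeral)
      next
        case (Suc b')
        then show ?thesis unfolding e Suc.IH z_def[symmetric] using True \<open>a = Suc a'\<close> by (simp add: algebra_simps eval_nat_numeral)
      qed
    qed
  qed
qed

definition TT :: "nat \<Rightarrow> nat \<Rightarrow> int" where
  "TT n j = (\<Sum>b\<le>n. (-1)^b * int (n choose b) * int (Suc b choose j))"

lemma TT_Suc: "TT (Suc n) j = TT n j - (\<Sum>b\<le>n. (-1)^b * int (n choose b) * int (Suc (Suc b) choose j))"
proof -
  let ?B = "(\<Sum>b\<le>n. (-1)^b * int (n choose b) * int (Suc (Suc b) choose j))"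
  let ?A = "(\<Sum>b\<le>n. (-1)^b * int (n choose Suc b) * int (Suc (Suc b) choose j))"
  have 1: "TT (Suc n) j = int (Suc 0 choose j) - ?B - ?A"
  proof -
    have "TT (Suc n) j = int (Suc 0 choose j) + (\<Sum>b\<le>n. (-1)^(Suc b) * int (Suc n choose Suc b) * int (Suc (Suc b) choose j))"
      unfolding TT_def by (simp only: sum.atMost_Suc_shift) simp
    also have "(\<Sum>b\<le>n. (-1)^(Suc b) * int (Suc n choose Suc b) * int (Suc (Suc b) choose j)) =
       (\<Sum>b\<le>n. - ((-1)^b * int (n choose b) * int (Suc (Suc b) choose j)) - (-1)^b * int (n choose Suc b) * int (Suc (Suc b) choose j))"
      by (rule sum.cong) (simp_all add: algebra_simps)
    also have "\<dots> = - ?B - ?A" by (simp add: sum_subtractf sum_negf)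
    finally show ?thesis by simp
  qed
  have "TT n j = (\<Sum>b\<le>Suc n. (-1)^b * int (n choose b) * int (Suc b choose j))"
    unfolding TT_def by simp
  also have "\<dots> = int (Suc 0 choose j) - ?A"
    by (simp only: sum.atMost_Suc_shift) (simp add: algebra_simps sum_negf)
  finally show ?thesis using 1 by simp
qed

lemma TT_closed: "TT n j = (-1)^n * ((if j = n then 1 else 0) + (if j = Suc n then 1 else 0))"
proof (induction n arbitrary: j)
  case 0
  then show ?case by (cases j) (auto simp: TT_def)
next
  case (Suc n)
  show ?case
  proof (cases j)
    case 0
    then show ?thesis using TT_Suc[of n 0] by (simp add: TT_def)
  next
    case (Suc j')
    have "(\<Sum>b\<le>n. (-1)^b * int (n choose b) * int (Suc (Suc b) choose j)) = TT n j' + TT n j"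
      unfolding TT_def Suc by (simp add: sum.distrib algebra_simps)
    then have "TT (Suc n) j = - TT n j'" by (simp add: TT_Suc)
    then show ?thesis using Suc.IH[of j'] \<open>j = Suc j'\<close> by simp
  qed
qed

lemma SS: assumes "j \<le> n"
  shows "(\<Sum>b<n. (-1)^b * int (n choose b) * int (Suc b choose j)) = (-1)^n * ((if j = n then 1 else 0) - int (Suc n choose j))"
proof -
  have "TT n j = (\<Sum>b<n. (-1)^b * int (n choose b) * int (Suc b choose j)) + (-1)^n * int (Suc n choose j)"
    unfolding TT_def by (simp add: lessThan_Suc_atMost[symmetric])
  then show ?thesis using TT_closed[of n j] assms by (simp add: algebra_simps)
qed

lemma S_ident: assumes "k \<le> n"
  shows "(\<Sum>b<n. (-1)^b * of_nat (n choose b) * (of_nat (Suc b choose (n - k)) + of_nat (Suc b choose k))) =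
    ((-1)^(n+1) * (of_nat ((n + 2) choose (k + 1)) - (if k = 0 then 1 else 0) - (if k = n then 1 else 0)) :: complex)"
proof -
  have i: "(\<Sum>b<n. (-1)^b * int (n choose b) * (int (Suc b choose (n - k)) + int (Suc b choose k))) =
     (-1)^(n+1) * (int ((n + 2) choose (k + 1)) - (if k = 0 then 1 else 0) - (if k = n then 1 else 0))"
  proof -
    have "(\<Sum>b<n. (-1)^b * int (n choose b) * (int (Suc b choose (n - k)) + int (Suc b choose k))) =
       (\<Sum>b<n. (-1)^b * int (n choose b) * int (Suc b choose (n - k))) + (\<Sum>b<n. (-1)^b * int (n choose b) * int (Suc b choose k))"
      by (simp add: sum.distrib algebra_simps)
    also have "\<dots> = (-1)^n * ((if n - k = n then 1 else 0) - int (Suc n choose (n - k))) + (-1)^n * ((if k = n then 1 else 0) - int (Suc n choose k))"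
      using assms by (simp add: SS)
    also have "Suc n choose (n - k) = Suc n choose (k + 1)"
      using assms binomial_symmetric[of "k+1" "Suc n"] by simp
    also have "int ((n + 2) choose (k + 1)) = int (Suc n choose k) + int (Suc n choose (k + 1))"
      by simp
    ultimately show ?thesis using assms by (auto simp: algebra_simps)
  qed
  have "of_int (\<Sum>b<n. (-1)^b * int (n choose b) * (int (Suc b choose (n - k)) + int (Suc b choose k))) =
     (of_int ((-1)^(n+1) * (int ((n + 2) choose (k + 1)) - (if k = 0 then 1 else 0) - (if k = n then 1 else 0))) :: complex)"
    by (simp only: i)
  then show ?thesis by simp
qed

lemma pdiff_mon: "pdiff (Ubar j) (dv (U 0) * M3 a b e) =
   (if j = b then dv (U 0) * dv (U a) * dv (Ubar e) else 0) + (if j = e then dv (U 0) * dv (U a) * dv (Ubar b) else 0)"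
  by (simp add: M3_def pdiff_mult pdiff_dv algebra_simps)

lemma V_mon: assumes "b \<le> N" "e \<le> N"
  shows "V N (dv (U 0) * M3 a b e) = dconst ((-1)^b) * (Dx^^b) (dv (U 0) * dv (U a) * dv (Ubar e)) +
     dconst ((-1)^e) * (Dx^^e) (dv (U 0) * dv (U a) * dv (Ubar b))"
proof -
  have "V N (dv (U 0) * M3 a b e) = (\<Sum>j\<le>N. (if j = b then dconst ((-1)^j) * (Dx^^j) (dv (U 0) * dv (U a) * dv (Ubar e)) else 0) +
      (if j = e then dconst ((-1)^j) * (Dx^^j) (dv (U 0) * dv (U a) * dv (Ubar b)) else 0))"
    unfolding V_def pdiff_mon by (intro sum.cong refl) (simp add: Dxn_add distrib_left)
  also have "\<dots> = dconst ((-1)^b) * (Dx^^b) (dv (U 0) * dv (U a) * dv (Ubar e)) +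
     dconst ((-1)^e) * (Dx^^e) (dv (U 0) * dv (U a) * dv (Ubar b))"
    using assms by (simp add: sum.distrib sum.delta)
  finally show ?thesis .
qed

lemma size_cubic: "size (cubic_mon n k) = 3"
  by (simp add: cubic_mon_def)

lemma part_R: "Poly_Mapping.lookup (Dx (V N (dv (U 0) * R n))) (cubic_mon n k) = 0"
proof -
  have "szge (1 + 5) (dv (U 0) * R n)" by (rule szge_mult[OF szge_dv szge_R])
  then have "szge 5 (Dx (V N (dv (U 0) * R n)))" by (intro szge_Dx szge_V) simp
  then show ?thesis by (rule lookup_szge) (simp add: size_cubic)
qed

lemma part_L: assumes "n \<le> N"
  shows "Poly_Mapping.lookup (Dx (V N (dv (U 0) * Lp n))) (cubic_mon n k) = 0"
proof -
  have "V N (dv (U 0) * dv (Ubar n)) = (\<Sum>j\<le>N. if j = n then dconst ((-1)^j) * (Dx^^j) (dv (U 0)) else 0)"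
    unfolding V_def by (intro sum.cong refl) (simp add: pdiff_mult pdiff_dv)
  also have "\<dots> = dconst ((-1)^n) * dv (U n)"
    using assms by (simp add: sum.delta Dxn_dv_U)
  finally have v: "V N (dv (U 0) * dv (Ubar n)) = dconst ((-1)^n) * dv (U n)" .
  have "dv (U 0) * Lp n = dconst (- ((1/(2*\<i>))^(Suc n))) * (dv (U 0) * dv (Ubar n))"
    unfolding Lp_def by (simp add: mult_ac)
  then have "Dx (V N (dv (U 0) * Lp n)) = dconst (- ((1/(2*\<i>))^(Suc n))) * (dconst ((-1)^n) * dv (U (Suc n)))"
    by (simp add: V_dconst_mult v Dx_dconst_mult Dx_dv)
  then show ?thesis by (simp add: lookup_dconst_mult lookup_dv cubic_mon_def)
qed

lemma N_ge: "n \<le> maxord (dv (U 0) * Y n)"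
proof -
  have "Poly_Mapping.lookup (Y n) {#Ubar n#} = - ((1/(2*\<i>))^(Suc n))"
  proof -
    have "Poly_Mapping.lookup (Q n) {#Ubar n#} = 0" by (rule lookup_szge[OF szge_Q]) simp
    moreover have "Poly_Mapping.lookup (R n) {#Ubar n#} = 0" by (rule lookup_szge[OF szge_R]) simp
    ultimately show ?thesis unfolding Y_decomp[of n] by (simp add: lookup_add Lp_def lookup_dconst_mult lookup_dv)
  qed
  moreover have "- ((1/(2*\<i>))^(Suc n)) \<noteq> 0" by (simp only: neg_equal_0_iff_equal power_eq_0_iff) simp
  ultimately have ne: "Poly_Mapping.lookup (Y n) {#Ubar n#} \<noteq> 0" by metis
  have "Poly_Mapping.lookup (dv (U 0) * Y n) {#U 0, Ubar n#} = Poly_Mapping.lookup (Y n) {#Ubar n#}"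
    by (simp add: dv_def lookup_single_mult)
  with ne have "Poly_Mapping.lookup (dv (U 0) * Y n) {#U 0, Ubar n#} \<noteq> 0" by simp
  then have "{#U 0, Ubar n#} \<in> Poly_Mapping.keys (dv (U 0) * Y n)" by (simp add: in_keys_iff)
  from maxord_ge[OF this, of "Ubar n"] show ?thesis by simp
qed

definition HH :: "nat \<Rightarrow> nat \<Rightarrow> nat \<Rightarrow> complex" where
  "HH x y r = (if x = y then of_nat (r choose x) else of_nat (r choose x) + of_nat (r choose y))"

lemma Gf: "Poly_Mapping.lookup ((Dx^^r) (dv (U 0) * dv (U q) * dv (Ubar e))) {#U x, Ubar 0, U y#} =
   (if e = 0 \<and> q + r = x + y then HH x y r else 0)"
  by (simp add: G3 G2 HH_def)

lemma Gf': assumes "x + y = n"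
  shows "Poly_Mapping.lookup (Dx ((Dx^^r) (dv (U 0) * dv (U q) * dv (Ubar e)))) {#U x, Ubar 0, U y#} =
   (if e = 0 \<and> q + Suc r = n then HH x y (Suc r) else 0)"
  using Gf[of "Suc r" q e x y] assms by simp

lemma A1_eval: "(\<Sum>a\<le>n. \<Sum>b\<le>n. \<Sum>e\<le>n. cc n a b e * ((-1)^b * (if e = 0 \<and> a + Suc b = n then HH x y (Suc b) else 0))) =
   (\<Sum>b<n. (1/(2*\<i>))^(n+2) * of_nat (n choose b) * (-1)^b * HH x y (Suc b))"
proof -
  have "(\<Sum>a\<le>n. \<Sum>b\<le>n. \<Sum>e\<le>n. cc n a b e * ((-1)^b * (if e = 0 \<and> a + Suc b = n then HH x y (Suc b) else 0))) =
     (\<Sum>a\<le>n. \<Sum>b\<le>n. \<Sum>e\<le>n. if e = 0 then (if a + b + 1 = n then (1/(2*\<i>))^(n+2) * of_nat (n choose b) * (-1)^b * HH x y (Suc b) else 0) else 0)"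
    by (intro sum.cong refl) (auto simp: cc_b0)
  also have "\<dots> = (\<Sum>a\<le>n. \<Sum>b\<le>n. if a + b + 1 = n then (1/(2*\<i>))^(n+2) * of_nat (n choose b) * (-1)^b * HH x y (Suc b) else 0)"
    by (simp add: sum.delta)
  also have "\<dots> = (\<Sum>b\<le>n. \<Sum>a\<le>n. if a = n - Suc b \<and> b < n then (1/(2*\<i>))^(n+2) * of_nat (n choose b) * (-1)^b * HH x y (Suc b) else 0)"
    by (subst sum.swap) (intro sum.cong refl, auto)
  also have "\<dots> = (\<Sum>b\<le>n. if b < n then (1/(2*\<i>))^(n+2) * of_nat (n choose b) * (-1)^b * HH x y (Suc b) else 0)"
    by (intro sum.cong refl) (auto simp: sum.delta)
  also have "\<dots> = (\<Sum>b<n. (1/(2*\<i>))^(n+2) * of_nat (n choose b) * (-1)^b * HH x y (Suc b))"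
    by (simp add: sum.If_cases lessThan_def atMost_def Collect_conj_eq[symmetric])
       (rule sum.cong, auto)
  finally show ?thesis .
qed

lemma part_Q: assumes "n \<le> N" "k \<le> n"
  shows "Poly_Mapping.lookup (Dx (V N (dv (U 0) * Q n))) (cubic_mon n k) =
     2 * (\<Sum>b<n. (1/(2*\<i>))^(n+2) * of_nat (n choose b) * (-1)^b * HH (n-k) k (Suc b))"
proof -
  let ?X = "\<lambda>a e. dv (U 0) * dv (U a) * dv (Ubar e)"
  let ?g = "\<lambda>r a e. (if e = 0 \<and> a + r = n then HH (n-k) k r else 0)"
  have le: "\<And>b. b \<le> n \<Longrightarrow> b \<le> N" using assms by simp
  have q: "dv (U 0) * Q n = (\<Sum>a\<le>n. \<Sum>b\<le>n. \<Sum>e\<le>n. dconst (cc n a b e) * (dv (U 0) * M3 a b e))"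
    by (simp add: Q_def T_def sum_distrib_left mult.left_commute)
  have v: "V N (dv (U 0) * Q n) = (\<Sum>a\<le>n. \<Sum>b\<le>n. \<Sum>e\<le>n. dconst (cc n a b e) *
      (dconst ((-1)^b) * (Dx^^b) (?X a e) + dconst ((-1)^e) * (Dx^^e) (?X a b)))"
    unfolding q V_sum V_dconst_mult by (intro sum.cong refl) (simp add: V_mon le)
  have "Poly_Mapping.lookup (Dx (V N (dv (U 0) * Q n))) (cubic_mon n k) =
     (\<Sum>a\<le>n. \<Sum>b\<le>n. \<Sum>e\<le>n. cc n a b e * ((-1)^b * ?g (Suc b) a e + (-1)^e * ?g (Suc e) a b))"
    unfolding v cubic_mon_def using assms
    by (simp add: Dx_sum Dx_add Dx_dconst_mult lookup_sum lookup_add lookup_dconst_mult Gf' del: funpow.simps)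
  also have "\<dots> = (\<Sum>a\<le>n. \<Sum>b\<le>n. \<Sum>e\<le>n. cc n a b e * ((-1)^b * ?g (Suc b) a e)) +
        (\<Sum>a\<le>n. \<Sum>b\<le>n. \<Sum>e\<le>n. cc n a b e * ((-1)^e * ?g (Suc e) a b))"
    by (simp add: distrib_left sum.distrib)
  also have "(\<Sum>a\<le>n. \<Sum>b\<le>n. \<Sum>e\<le>n. cc n a b e * ((-1)^e * ?g (Suc e) a b)) =
        (\<Sum>a\<le>n. \<Sum>b\<le>n. \<Sum>e\<le>n. cc n a b e * ((-1)^b * ?g (Suc b) a e))"
    by (rule sum.cong[OF refl], subst sum.swap) (simp add: cc_sym)
  finally show ?thesis using A1_eval[of n "n-k" k] by simp
qed

theorem proposition2p5:
  fixes \<alpha> :: complex and n k :: nat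
  assumes "n \<ge> 1" and "k \<le> n"
  shows "Poly_Mapping.lookup (rhs \<alpha> n) (cubic_mon n k) =
    (if 2 * k = n then 1 / 2 else 1) *
    (4 * (-1) ^ (n + 1) * \<alpha> / (2 * \<i>) ^ (n + 2) *
      (of_nat ((n + 2) choose (k + 1)) - (if k = 0 then 1 else 0) - (if k = n then 1 else 0)))"
proof -
  define N where "N = maxord (dv (U 0) * Y n)"
  define h :: complex where "h = (if 2 * k = n then 1 / 2 else 1)"
  define B :: complex where "B = (of_nat ((n + 2) choose (k + 1)) - (if k = 0 then 1 else 0) - (if k = n then 1 else 0))"
  define S :: complex where "S = (\<Sum>b<n. (-1)^b * of_nat (n choose b) * (of_nat (Suc b choose (n - k)) + of_nat (Suc b choose k)))"
  have N: "n \<le> N" unfolding N_def by (rule N_ge)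
  have "Poly_Mapping.lookup (rhs \<alpha> n) (cubic_mon n k) = 2 * \<alpha> * Poly_Mapping.lookup (Dx (V N (dv (U 0) * Y n))) (cubic_mon n k)"
    unfolding rhs_def varderiv_V N_def lookup_dconst_mult ..
  also have "Poly_Mapping.lookup (Dx (V N (dv (U 0) * Y n))) (cubic_mon n k) =
      Poly_Mapping.lookup (Dx (V N (dv (U 0) * Lp n))) (cubic_mon n k) + Poly_Mapping.lookup (Dx (V N (dv (U 0) * Q n))) (cubic_mon n k)
      + Poly_Mapping.lookup (Dx (V N (dv (U 0) * R n))) (cubic_mon n k)"
    by (simp only: Y_decomp[of n] distrib_left V_add Dx_add lookup_add)
  also have "\<dots> = 2 * (\<Sum>b<n. (1/(2*\<i>))^(n+2) * of_nat (n choose b) * (-1)^b * HH (n-k) k (Suc b))"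
    using N assms by (simp add: part_L part_R part_Q)
  also have "(\<Sum>b<n. (1/(2*\<i>))^(n+2) * of_nat (n choose b) * (-1)^b * HH (n-k) k (Suc b)) = (1/(2*\<i>))^(n+2) * h * S"
    unfolding S_def sum_distrib_left
  proof (rule sum.cong[OF refl])
    fix b
    have "HH (n-k) k (Suc b) = h * (of_nat (Suc b choose (n - k)) + of_nat (Suc b choose k))"
      using assms(2) unfolding HH_def h_def by auto
    then show "(1/(2*\<i>))^(n+2) * of_nat (n choose b) * (-1)^b * HH (n-k) k (Suc b) =
       (1/(2*\<i>))^(n+2) * h * ((-1)^b * of_nat (n choose b) * (of_nat (Suc b choose (n - k)) + of_nat (Suc b choose k)))"
      by (simp add: algebra_simps)
  qed
  also have "S = (-1)^(n+1) * B"
    unfolding S_def B_def by (rule S_ident[OF assms(2)])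
  finally have fin: "Poly_Mapping.lookup (rhs \<alpha> n) (cubic_mon n k) = 2 * \<alpha> * (2 * ((1/(2*\<i>))^(n+2) * h * ((-1)^(n+1) * B)))" .
  have ar: "2 * \<alpha> * (2 * (1/w * h * (s * B))) = h * (4 * s * \<alpha> / w * B)" for w s :: complex
    by (simp add: divide_inverse algebra_simps)
  show ?thesis unfolding h_def[symmetric] B_def[symmetric] fin power_one_over ar ..
qed
end
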